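(* Let $k,r \in \mathbb{N}$ and $s \in [0, r]$. Then \[\mathsf{D}_k(C_{2}^{r}) \le \mathsf{D}_{\mathsf{D}_{k}(C_2^s) - s} (C_2^{r-s}) + s.\]
   Context: $C_2^m$ is the elementary abelian $2$-group of rank $m$ ($C_2^0$ is the trivial group). A sequence over a finite abelian group $G$ is a finite unordered list of elements with repetitions; zero-sum means its terms sum to $0$. $\mathsf{D}_k(G)$ ($k\in\mathbb{N}$) is the smallest $\ell$ such that every sequence over $G$ of length at least $\ell$ has $k$ disjoint non-empty zero-sum subsequences. *)

theory Defs
  imports Main "HOL-Library.Z2" "HOL-Library.Function_Algebras"
begin

text \<open>The elementary abelian 2-group C_2^m, realised as the vectors
  v : nat -> bit (bit = Z/2Z) supported on {0..<m}, with pointwise addition.\<close>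
definition C2pow :: "nat \<Rightarrow> (nat \<Rightarrow> bit) set" where
  "C2pow m = {v. \<forall>j\<ge>m. v j = 0}"

text \<open>A sequence over G is a list with all terms in G (order is irrelevant for
  the notions below).\<close>
definition has_disj_zero_sums :: "nat \<Rightarrow> ('a::comm_monoid_add) list \<Rightarrow> bool" where
  "has_disj_zero_sums k xs \<longleftrightarrow>
     (\<exists>I :: nat \<Rightarrow> nat set.
        (\<forall>i<k. I i \<noteq> {} \<and> I i \<subseteq> {..<length xs} \<and> (\<Sum>j\<in>I i. xs ! j) = 0) \<and>
        (\<forall>i<k. \<forall>i'<k. i \<noteq> i' \<longrightarrow> I i \<inter> I i' = {}))"

definition Dk :: "nat \<Rightarrow> ('a::comm_monoid_add) set \<Rightarrow> nat" where
  "Dk k G = (LEAST l. \<forall>xs. set xs \<subseteq> G \<and> length xs \<ge> l \<longrightarrow> has_disj_zero_sums k xs)"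

end

theory Submission
  imports Defs
begin


lemma bit_self: "(a::bit) + a = 0" by (cases a) simp_all
lemma fun_self: "(v::nat\<Rightarrow>bit) + v = 0" by (rule ext) (simp add: bit_self del: add_bit_eq_xor)

definition lin :: "((nat\<Rightarrow>bit) \<Rightarrow> (nat\<Rightarrow>bit)) \<Rightarrow> bool" where
  "lin f \<longleftrightarrow> (\<forall>x y. f (x + y) = f x + f y)"

lemma lin_zero: "lin f \<Longrightarrow> f 0 = 0"
  unfolding lin_def by (metis add_cancel_right_right add_0)

lemma lin_sum: "lin f \<Longrightarrow> f (\<Sum>j\<in>A. g j) = (\<Sum>j\<in>A. f (g j))"
  by (induction A rule: infinite_finite_induct) (auto simp: lin_zero lin_def)

lemma C2pow_add: "x \<in> C2pow m \<Longrightarrow> y \<in> C2pow m \<Longrightarrow> x + y \<in> C2pow m"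
  by (simp add: C2pow_def)

lemma C2pow_zero: "0 \<in> C2pow m" by (simp add: C2pow_def)

lemma C2pow_sum: "(\<And>j. j \<in> A \<Longrightarrow> g j \<in> C2pow m) \<Longrightarrow> (\<Sum>j\<in>A. g j) \<in> C2pow m"
  by (induction A rule: infinite_finite_induct) (auto simp: C2pow_zero C2pow_add)

lemma C2pow_mono: "s \<le> t \<Longrightarrow> C2pow s \<subseteq> C2pow t"
  by (auto simp: C2pow_def)

lemma C2pow_finite: "finite (C2pow m)"
proof -
  have "C2pow m \<subseteq> (\<lambda>S j. if j \<in> S then 1 else 0) ` Pow {..<m}"
  proof
    fix v assume v: "v \<in> C2pow m"
    have "v = (\<lambda>j. if j \<in> {j. j < m \<and> v j = 1} then 1 else 0)"
      using v by (auto simp: C2pow_def fun_eq_iff)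
    then show "v \<in> (\<lambda>S j. if j \<in> S then 1 else 0) ` Pow {..<m}" by blast
  qed
  then show ?thesis by (rule finite_subset) simp
qed


lemma pigeon_fiber:
  assumes "finite G" "finite A" "f ` A \<subseteq> G" "card G * t \<le> card A" "A \<noteq> {}"
  shows "\<exists>v. t \<le> card {a\<in>A. f a = v}"
proof (rule ccontr)
  assume "\<not> ?thesis"
  hence lt: "\<And>v. card {a\<in>A. f a = v} < t" by (simp add: not_le)
  have "A = (\<Union>v\<in>G. {a\<in>A. f a = v})" using assms(3) by auto
  moreover have "card (\<Union>v\<in>G. {a\<in>A. f a = v}) = (\<Sum>v\<in>G. card {a\<in>A. f a = v})"
    by (rule card_UN_disjoint) (use assms(1,2) in auto)
  ultimately have "card A = (\<Sum>v\<in>G. card {a\<in>A. f a = v})" by simp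
  also have "\<dots> < (\<Sum>v\<in>G. t)"
  proof (rule sum_strict_mono)
    show "finite G" by (rule assms(1))
    show "G \<noteq> {}" using assms(3,5) by blast
  qed (rule lt)
  finally show False using assms(4) by (simp add: mult.commute)
qed

lemma Dk_exists: "\<exists>l. \<forall>xs. set xs \<subseteq> C2pow m \<and> length xs \<ge> l \<longrightarrow> has_disj_zero_sums k xs"
proof (intro exI[of _ "card (C2pow m) * (2*k)"] allI impI)
  fix xs :: "(nat \<Rightarrow> bit) list"
  assume a: "set xs \<subseteq> C2pow m \<and> card (C2pow m) * (2*k) \<le> length xs"
  show "has_disj_zero_sums k xs"
  proof (cases "k = 0")
    case True then show ?thesis by (simp add: has_disj_zero_sums_def)
  next
    case False
    have "card (C2pow m) \<noteq> 0" using C2pow_finite C2pow_zero by (metis card_0_eq empty_iff)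
    hence "0 < card (C2pow m) * (2*k)" using False by simp
    hence ne: "{..<length xs} \<noteq> {}" using a by (auto simp: lessThan_empty_iff)
    have "(\<lambda>j. xs ! j) ` {..<length xs} \<subseteq> C2pow m" using a by auto
    then obtain v where v: "2*k \<le> card {j\<in>{..<length xs}. xs ! j = v}"
      using pigeon_fiber[of "C2pow m" "{..<length xs}" "\<lambda>j. xs ! j" "2*k"] C2pow_finite a ne by auto
    define F where "F = {j\<in>{..<length xs}. xs ! j = v}"
    define q where "q = sorted_list_of_set F"
    have fF: "finite F" by (simp add: F_def)
    have lq: "length q = card F" "distinct q" "set q = F" using fF by (auto simp: q_def)
    have kq: "2*k \<le> length q" using v lq(1) unfolding F_def by simp
    define I where "I i = {q ! (2*i), q ! (2*i+1)}" for i
    show ?thesis unfolding has_disj_zero_sums_def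
    proof (intro exI[of _ I] conjI allI impI)
      fix i assume i: "i < k"
      hence b: "2*i < length q" "2*i+1 < length q" using kq by linarith+
      hence "q ! (2*i) \<in> F" "q ! (2*i+1) \<in> F" using lq(3) nth_mem by blast+
      moreover have "q ! (2*i) \<noteq> q ! (2*i+1)" using nth_eq_iff_index_eq[OF lq(2) b] by simp
      ultimately have m: "q ! (2*i) \<in> F" "q ! (2*i+1) \<in> F" "q ! (2*i) \<noteq> q ! (2*i+1)" by blast+
      show "I i \<noteq> {}" unfolding I_def by blast
      have mm: "q ! (2*i) < length xs" "xs ! (q ! (2*i)) = v" "q ! (2*i+1) < length xs"
        "xs ! (q ! (2*i+1)) = v" using m(1,2) unfolding F_def by simp_all
      show "I i \<subseteq> {..<length xs}" unfolding I_def using mm by simp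
      from mm(2,4) show "(\<Sum>j\<in>I i. xs ! j) = 0" unfolding I_def using m(3) by (simp add: fun_self)
    next
      fix i i' assume i: "i < k" "i' < k" "i \<noteq> i'"
      hence b: "2*i < length q" "2*i+1 < length q" "2*i' < length q" "2*i'+1 < length q"
        using kq by linarith+
      have d: "\<And>a c. a < length q \<Longrightarrow> c < length q \<Longrightarrow> q!a = q!c \<Longrightarrow> a = c"
        using nth_eq_iff_index_eq[OF lq(2)] by simp
      have n: "2*i \<noteq> 2*i'" "2*i+1 \<noteq> 2*i'" "2*i \<noteq> 2*i'+1" "2*i+1 \<noteq> 2*i'+1"
        using i(3) by presburger+
      have "q ! (2*i) \<noteq> q ! (2*i')" using d[OF b(1) b(3)] n(1) by blast
      moreover have "q ! (2*i+1) \<noteq> q ! (2*i')" using d[OF b(2) b(3)] n(2) by blast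
      moreover have "q ! (2*i) \<noteq> q ! (2*i'+1)" using d[OF b(1) b(4)] n(3) by blast
      moreover have "q ! (2*i+1) \<noteq> q ! (2*i'+1)" using d[OF b(2) b(4)] n(4) by blast
      ultimately show "I i \<inter> I i' = {}" unfolding I_def by blast
    qed
  qed
qed

lemma Dk_spec: "set xs \<subseteq> C2pow m \<Longrightarrow> length xs \<ge> Dk k (C2pow m) \<Longrightarrow> has_disj_zero_sums k xs"
proof -
  have "\<forall>xs. set xs \<subseteq> C2pow m \<and> length xs \<ge> Dk k (C2pow m) \<longrightarrow> has_disj_zero_sums k xs"
    unfolding Dk_def by (rule LeastI_ex[OF Dk_exists])
  thus "set xs \<subseteq> C2pow m \<Longrightarrow> length xs \<ge> Dk k (C2pow m) \<Longrightarrow> has_disj_zero_sums k xs" by blast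
qed

lemma Dk_ge: "Dk k (C2pow m) \<ge> k"
proof (rule ccontr)
  assume "\<not> ?thesis"
  hence lt: "Dk k (C2pow m) < k" by simp
  let ?n = "Dk k (C2pow m)"
  have "has_disj_zero_sums k (replicate ?n (0::nat\<Rightarrow>bit))"
    by (rule Dk_spec) (auto simp: C2pow_zero)
  then obtain I where I: "\<forall>i<k. I i \<noteq> {} \<and> I i \<subseteq> {..<?n}"
    "\<forall>i<k. \<forall>i'<k. i \<noteq> i' \<longrightarrow> I i \<inter> I i' = {}"
    unfolding has_disj_zero_sums_def by auto
  have "\<forall>i<k. \<exists>a. a \<in> I i" using I by blast
  then obtain f where f: "\<And>i. i < k \<Longrightarrow> f i \<in> I i" by metis
  have "inj_on f {..<k}"
  proof (rule inj_onI)
    fix i i' assume ii: "i \<in> {..<k}" "i' \<in> {..<k}" "f i = f i'"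
    show "i = i'"
    proof (rule ccontr)
      assume "i \<noteq> i'"
      hence "I i \<inter> I i' = {}" using I(2) ii by simp
      thus False using f ii by (metis IntI empty_iff lessThan_iff)
    qed
  qed
  moreover have "f ` {..<k} \<subseteq> {..<?n}" using f I(1) by blast
  ultimately have "card {..<k} \<le> card {..<?n}" by (intro card_inj_on_le) auto
  then show False using lt by simp
qed

declare add_bit_eq_xor[simp del] mult_bit_eq_and[simp del]

lemma elim:
  assumes "s \<le> r" "set xs \<subseteq> C2pow r"
  shows "\<exists>\<psi> \<pi> P. lin \<psi> \<and> lin \<pi> \<and> (\<forall>y. \<psi> y \<in> C2pow s) \<and>
     (\<forall>y\<in>C2pow r. \<psi> y = 0 \<and> \<pi> y = 0 \<longrightarrow> y = 0) \<and> P \<subseteq> {..<length xs} \<and>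
     (\<forall>p\<in>P. \<pi> (xs ! p) = 0) \<and>
     ((card P = s \<and> (\<forall>y\<in>C2pow r. \<pi> y \<in> C2pow (r - s))) \<or> (\<forall>j<length xs. \<pi> (xs ! j) = 0))"
  using assms(1)
proof (induction s)
  case 0
  show ?case
    by (rule exI[of _ "\<lambda>_. 0"], rule exI[of _ id], rule exI[of _ "{}"])
       (simp add: lin_def C2pow_def fun_eq_iff)
next
  case (Suc s)
  obtain \<psi> \<pi> P where H: "lin \<psi>" "lin \<pi>" "\<forall>y. \<psi> y \<in> C2pow s"
     "\<forall>y\<in>C2pow r. \<psi> y = 0 \<and> \<pi> y = 0 \<longrightarrow> y = 0" "P \<subseteq> {..<length xs}"
     "\<forall>p\<in>P. \<pi> (xs ! p) = 0"
     "(card P = s \<and> (\<forall>y\<in>C2pow r. \<pi> y \<in> C2pow (r - s))) \<or> (\<forall>j<length xs. \<pi> (xs ! j) = 0)"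
    using Suc.IH[OF Suc_leD[OF Suc.prems]] by blast
  show ?case
  proof (cases "\<forall>j<length xs. \<pi> (xs ! j) = 0")
    case True
    have "\<forall>y. \<psi> y \<in> C2pow (Suc s)" using H(3) C2pow_mono[of s "Suc s"] by auto
    then show ?thesis
      apply (rule_tac exI[of _ \<psi>], rule_tac exI[of _ \<pi>], rule_tac exI[of _ P])
      using H True by blast
  next
    case False
    then obtain j where j: "j < length xs" "\<pi> (xs ! j) \<noteq> 0" by blast
    from False H(7) have cP: "card P = s" and pr: "\<forall>y\<in>C2pow r. \<pi> y \<in> C2pow (r - s)" by auto
    define v where "v = \<pi> (xs ! j)"
    have vC: "v \<in> C2pow (r - s)" using pr nth_mem[OF j(1)] assms(2) v_def by blast
    have "\<exists>c. v c \<noteq> 0"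
    proof (rule ccontr)
      assume "\<not> ?thesis" hence "v = 0" by (auto simp: fun_eq_iff)
      thus False using j(2) v_def by simp
    qed
    then obtain c where "v c \<noteq> 0" by blast
    hence c: "v c = 1" by simp
    have cr: "c < r - s"
    proof (rule ccontr)
      assume "\<not> c < r - s" hence "v c = 0" using vC by (simp add: C2pow_def)
      thus False using c by simp
    qed
    define \<tau> where "\<tau> u = (\<lambda>i. u i + u c * v i)" for u :: "nat \<Rightarrow> bit"
    define del where "del u = (\<lambda>i. if i < c then u i else u (Suc i))" for u :: "nat \<Rightarrow> bit"
    define \<pi>' where "\<pi>' y = del (\<tau> (\<pi> y))" for y
    define \<psi>' where "\<psi>' y = (\<psi> y)(s := \<pi> y c)" for y
    have lin\<pi>': "lin \<pi>'" using H(2)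
      by (auto simp: lin_def \<pi>'_def del_def \<tau>_def fun_eq_iff algebra_simps simp del: add_bit_eq_xor mult_bit_eq_and)
    have lin\<psi>': "lin \<psi>'" using H(1,2)
      by (auto simp: lin_def \<psi>'_def fun_eq_iff simp del: add_bit_eq_xor mult_bit_eq_and)
    have \<psi>'C: "\<forall>y. \<psi>' y \<in> C2pow (Suc s)" using H(3) by (auto simp: C2pow_def \<psi>'_def)
    have inj: "\<forall>y\<in>C2pow r. \<psi>' y = 0 \<and> \<pi>' y = 0 \<longrightarrow> y = 0"
    proof (intro ballI impI)
      fix y assume y: "y \<in> C2pow r" and z: "\<psi>' y = 0 \<and> \<pi>' y = 0"
      have "\<psi> y s = 0" using H(3) by (simp add: C2pow_def)
      hence p0: "\<psi> y = 0" using z by (auto simp: \<psi>'_def fun_eq_iff split: if_splits)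
      have "\<psi>' y s = 0" using z by simp
      hence uc: "\<pi> y c = 0" by (simp add: \<psi>'_def)
      have "\<tau> (\<pi> y) = \<pi> y" using uc by (simp add: \<tau>_def)
      hence d0: "del (\<pi> y) = 0" using z by (simp add: \<pi>'_def)
      have "\<pi> y = 0"
      proof (rule ext)
        fix i show "\<pi> y i = 0 i"
        proof (cases "i < c")
          case True
          have "del (\<pi> y) i = 0" using d0 by simp
          then show ?thesis using True by (simp add: del_def)
        next
          case False
          show ?thesis
          proof (cases "i = c")
            case True then show ?thesis using uc by simp
          next
            case F2: False
            then obtain i' where ii: "i = Suc i'" "\<not> i' < c" using False by (cases i) auto
            have "del (\<pi> y) i' = 0" using d0 by simp
            then show ?thesis using ii by (simp add: del_def)
          qed
        qed
      qed
      then show "y = 0" using H(4) y p0 by blast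
    qed
    have \<pi>'0: "\<pi>' (xs ! p) = 0" if "p \<in> P" for p
      using H(6) that by (simp add: \<pi>'_def \<tau>_def del_def fun_eq_iff)
    have \<pi>'j: "\<pi>' (xs ! j) = 0"
      by (simp add: \<pi>'_def \<tau>_def del_def fun_eq_iff c bit_self flip: v_def del: add_bit_eq_xor)
    have jP: "j \<notin> P" using H(6) j(2) by auto
    have cP': "card (insert j P) = Suc s"
      using jP cP H(5) by (simp add: finite_subset)
    have pr': "\<forall>y\<in>C2pow r. \<pi>' y \<in> C2pow (r - Suc s)"
    proof
      fix y assume y: "y \<in> C2pow r"
      hence u: "\<pi> y \<in> C2pow (r - s)" using pr by blast
      show "\<pi>' y \<in> C2pow (r - Suc s)"
        using u vC cr by (auto simp: C2pow_def \<pi>'_def \<tau>_def del_def)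
    qed
    have s1: "insert j P \<subseteq> {..<length xs}" using H(5) j(1) by auto
    have s2: "\<forall>p\<in>insert j P. \<pi>' (xs ! p) = 0" using \<pi>'0 \<pi>'j by blast
    show ?thesis
      apply (rule exI[of _ \<psi>'], rule exI[of _ \<pi>'], rule exI[of _ "insert j P"])
      using lin\<pi>' lin\<psi>' \<psi>'C inj s1 s2 cP' pr' by blast
  qed
qed


declare add_bit_eq_xor[simp del] mult_bit_eq_and[simp del]

lemma blocks:
  assumes "lin \<psi>" "lin \<pi>" "\<forall>y. \<psi> y \<in> C2pow s" "\<forall>y\<in>C2pow r. \<psi> y = 0 \<and> \<pi> y = 0 \<longrightarrow> y = 0"
    "set xs \<subseteq> C2pow r"
    "\<forall>i<D. B i \<noteq> {} \<and> B i \<subseteq> {..<length xs} \<and> \<pi> (\<Sum>j\<in>B i. xs ! j) = 0"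
    "\<forall>i<D. \<forall>i'<D. i \<noteq> i' \<longrightarrow> B i \<inter> B i' = {}"
    "D \<ge> Dk k (C2pow s)"
  shows "has_disj_zero_sums k xs"
proof -
  define us where "us = map (\<lambda>i. \<psi> (\<Sum>j\<in>B i. xs ! j)) [0..<D]"
  have lu: "length us = D" by (simp add: us_def)
  have "set us \<subseteq> C2pow s" using assms(3) by (auto simp: us_def)
  hence "has_disj_zero_sums k us" using Dk_spec[of us s k] lu assms(8) by simp
  then obtain K where K: "\<forall>l<k. K l \<noteq> {} \<and> K l \<subseteq> {..<length us} \<and> (\<Sum>i\<in>K l. us ! i) = 0"
    "\<forall>l<k. \<forall>l'<k. l \<noteq> l' \<longrightarrow> K l \<inter> K l' = {}"
    unfolding has_disj_zero_sums_def by blast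
  define I where "I l = (\<Union>i\<in>K l. B i)" for l
  show ?thesis unfolding has_disj_zero_sums_def
  proof (intro exI[of _ I] conjI allI impI)
    fix l assume l: "l < k"
    have KD: "K l \<subseteq> {..<D}" using K(1) l lu by auto
    have KiD: "i < D" if "i \<in> K l" for i using KD that by blast
    have Bi: "B i \<noteq> {}" "B i \<subseteq> {..<length xs}" "\<pi> (\<Sum>j\<in>B i. xs ! j) = 0" if "i \<in> K l" for i
      using assms(6) KiD[OF that] by simp_all
    obtain i0 where i0: "i0 \<in> K l" using K(1) l by blast
    have "B i0 \<subseteq> I l" unfolding I_def using i0 by blast
    then show "I l \<noteq> {}" using Bi(1)[OF i0] by blast
    show "I l \<subseteq> {..<length xs}" unfolding I_def using Bi(2) by blast
    have fin: "finite (K l)" using KD finite_subset by blast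
    have finB: "\<forall>i\<in>K l. finite (B i)" using Bi(2) finite_subset by blast
    have disB: "\<forall>i\<in>K l. \<forall>j\<in>K l. i \<noteq> j \<longrightarrow> B i \<inter> B j = {}"
    proof (intro ballI impI)
      fix i j assume "i \<in> K l" "j \<in> K l" "i \<noteq> j"
      thus "B i \<inter> B j = {}" using assms(7) KiD by simp
    qed
    define y where "y = (\<Sum>i\<in>K l. \<Sum>j\<in>B i. xs ! j)"
    have eq: "(\<Sum>j\<in>I l. xs ! j) = y" unfolding I_def y_def
      by (rule sum.UNION_disjoint[OF fin finB disB])
    have yC: "y \<in> C2pow r" unfolding y_def
    proof (intro C2pow_sum)
      fix i j assume "i \<in> K l" "j \<in> B i"
      hence "j < length xs" using Bi(2) by blast
      thus "xs ! j \<in> C2pow r" using assms(5) nth_mem by blast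
    qed
    have "\<psi> y = (\<Sum>i\<in>K l. \<psi> (\<Sum>j\<in>B i. xs ! j))" unfolding y_def by (rule lin_sum[OF assms(1)])
    also have "\<dots> = (\<Sum>i\<in>K l. us ! i)"
      by (rule sum.cong) (use KD in \<open>auto simp: us_def\<close>)
    also have "\<dots> = 0" using K(1) l by blast
    finally have p1: "\<psi> y = 0" .
    have "\<pi> y = (\<Sum>i\<in>K l. \<pi> (\<Sum>j\<in>B i. xs ! j))" unfolding y_def by (rule lin_sum[OF assms(2)])
    also have "\<dots> = (\<Sum>i\<in>K l. 0)"
      by (rule sum.cong) (use Bi(3) in auto)
    finally have p2: "\<pi> y = 0" by simp
    show "(\<Sum>j\<in>I l. xs ! j) = 0" using eq assms(4) yC p1 p2 by blast
  next
    fix l l' assume ll: "l < k" "l' < k" "l \<noteq> l'"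
    have KD: "K l \<subseteq> {..<D}" "K l' \<subseteq> {..<D}" using K(1) ll lu by auto
    have dK: "K l \<inter> K l' = {}" using K(2) ll by blast
    show "I l \<inter> I l' = {}"
    proof (rule ccontr)
      assume "I l \<inter> I l' \<noteq> {}"
      then obtain x i i' where x: "i \<in> K l" "i' \<in> K l'" "x \<in> B i" "x \<in> B i'" unfolding I_def by blast
      have "i \<noteq> i'" using x(1,2) dK by blast
      moreover have "i < D" "i' < D" using x(1,2) KD by blast+
      ultimately have "B i \<inter> B i' = {}" using assms(7) by simp
      thus False using x(3,4) by blast
    qed
  qed
qed

theorem theorem7p15:
  fixes k r s :: nat
  assumes "k \<ge> 1" and "s \<le> r"
  shows "Dk k (C2pow r) \<le> Dk (Dk k (C2pow s) - s) (C2pow (r - s)) + s"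
proof -
  define D where "D = Dk k (C2pow s)"
  define M where "M = Dk (D - s) (C2pow (r - s))"
  have MD: "M \<ge> D - s" unfolding M_def by (rule Dk_ge)
  have "\<forall>xs. set xs \<subseteq> C2pow r \<and> length xs \<ge> M + s \<longrightarrow> has_disj_zero_sums k xs"
  proof (intro allI impI)
    fix xs :: "(nat \<Rightarrow> bit) list" assume a: "set xs \<subseteq> C2pow r \<and> M + s \<le> length xs"
    obtain \<psi> \<pi> P where H: "lin \<psi>" "lin \<pi>" "\<forall>y. \<psi> y \<in> C2pow s"
     "\<forall>y\<in>C2pow r. \<psi> y = 0 \<and> \<pi> y = 0 \<longrightarrow> y = 0" "P \<subseteq> {..<length xs}"
     "\<forall>p\<in>P. \<pi> (xs ! p) = 0"
     "(card P = s \<and> (\<forall>y\<in>C2pow r. \<pi> y \<in> C2pow (r - s))) \<or> (\<forall>j<length xs. \<pi> (xs ! j) = 0)"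
      using elim[OF assms(2), of xs] a by blast
    have Dl: "D \<le> length xs" using a MD by linarith
    show "has_disj_zero_sums k xs"
    proof (cases "\<forall>j<length xs. \<pi> (xs ! j) = 0")
      case True
      show ?thesis
      proof (rule blocks[of \<psi> \<pi> s r xs D "\<lambda>i. {i}"])
        show "\<forall>i<D. {i} \<noteq> {} \<and> {i} \<subseteq> {..<length xs} \<and> \<pi> (\<Sum>j\<in>{i}. xs ! j) = 0"
          using True Dl by auto
        show "\<forall>i<D. \<forall>i'<D. i \<noteq> i' \<longrightarrow> {i} \<inter> {i'} = {}" by auto
      qed (use H(1-4) a in \<open>simp_all add: D_def\<close>)
    next
      case False
      hence cP: "card P = s" and pr: "\<forall>y\<in>C2pow r. \<pi> y \<in> C2pow (r - s)" using H(7) by auto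
      have fP: "finite P" using H(5) finite_subset by blast
      define Q where "Q = {..<length xs} - P"
      define qs where "qs = sorted_list_of_set Q"
      have fQ: "finite Q" by (simp add: Q_def)
      have qs: "length qs = card Q" "distinct qs" "set qs = Q" using fQ by (auto simp: qs_def)
      have cQ: "card Q = length xs - s" unfolding Q_def using card_Diff_subset[OF fP H(5)] cP by simp
      define zs where "zs = map (\<lambda>j. \<pi> (xs ! j)) qs"
      have lz: "length zs = length qs" by (simp add: zs_def)
      have zC: "set zs \<subseteq> C2pow (r - s)"
      proof
        fix z assume "z \<in> set zs"
        then obtain j where j: "j \<in> Q" "z = \<pi> (xs ! j)" using qs(3) by (auto simp: zs_def)
        hence "xs ! j \<in> C2pow r" using a nth_mem[of j xs] by (auto simp: Q_def)
        thus "z \<in> C2pow (r - s)" using pr j by blast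
      qed
      have "M \<le> length zs" using lz qs(1) cQ a by linarith
      hence "has_disj_zero_sums (D - s) zs" using Dk_spec[OF zC] unfolding M_def by blast
      then obtain T' where T': "\<forall>i<D - s. T' i \<noteq> {} \<and> T' i \<subseteq> {..<length zs} \<and> (\<Sum>a\<in>T' i. zs ! a) = 0"
        "\<forall>i<D - s. \<forall>i'<D - s. i \<noteq> i' \<longrightarrow> T' i \<inter> T' i' = {}"
        unfolding has_disj_zero_sums_def by blast
      define T where "T i = (\<lambda>a. qs ! a) ` T' i" for i
      have injq: "\<And>a b. a < length qs \<Longrightarrow> b < length qs \<Longrightarrow> qs ! a = qs ! b \<Longrightarrow> a = b"
        using nth_eq_iff_index_eq[OF qs(2)] by simp
      have Tp: "T i \<noteq> {} \<and> T i \<subseteq> Q \<and> \<pi> (\<Sum>j\<in>T i. xs ! j) = 0" if i: "i < D - s" for i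
      proof (intro conjI)
        show "T i \<noteq> {}" using T' i by (simp add: T_def)
        have sub: "T' i \<subseteq> {..<length qs}" using T' i lz by auto
        show "T i \<subseteq> Q" unfolding T_def
        proof
          fix x assume "x \<in> (\<lambda>a. qs ! a) ` T' i"
          then obtain a where "a \<in> T' i" "x = qs ! a" by blast
          thus "x \<in> Q" using sub qs(3) nth_mem by blast
        qed
        have inj: "inj_on (\<lambda>a. qs ! a) (T' i)"
          by (rule inj_onI) (use sub injq in blast)
        have "\<pi> (\<Sum>j\<in>T i. xs ! j) = (\<Sum>j\<in>T i. \<pi> (xs ! j))" by (rule lin_sum[OF H(2)])
        also have "\<dots> = (\<Sum>a\<in>T' i. \<pi> (xs ! (qs ! a)))" unfolding T_def
          by (simp add: sum.reindex[OF inj])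
        also have "\<dots> = (\<Sum>a\<in>T' i. zs ! a)"
          by (rule sum.cong) (use sub in \<open>auto simp: zs_def\<close>)
        also have "\<dots> = 0" using T' i by blast
        finally show "\<pi> (\<Sum>j\<in>T i. xs ! j) = 0" .
      qed
      have Td: "T i \<inter> T i' = {}" if "i < D - s" "i' < D - s" "i \<noteq> i'" for i i'
      proof -
        have d: "T' i \<inter> T' i' = {}" using T'(2) that by blast
        have "T' i \<subseteq> {..<length qs}" "T' i' \<subseteq> {..<length qs}" using T' that lz by auto
        show ?thesis unfolding T_def
        proof (rule ccontr)
          assume "(\<lambda>a. qs ! a) ` T' i \<inter> (\<lambda>a. qs ! a) ` T' i' \<noteq> {}"
          then obtain a b where ab: "a \<in> T' i" "b \<in> T' i'" "qs ! a = qs ! b" by blast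
          hence "a = b" using injq \<open>T' i \<subseteq> {..<length qs}\<close> \<open>T' i' \<subseteq> {..<length qs}\<close> by blast
          thus False using ab d by blast
        qed
      qed
      define ps where "ps = sorted_list_of_set P"
      have ps: "length ps = s" "distinct ps" "set ps = P" using fP cP by (auto simp: ps_def)
      have injp: "\<And>a b. a < length ps \<Longrightarrow> b < length ps \<Longrightarrow> ps ! a = ps ! b \<Longrightarrow> a = b"
        using nth_eq_iff_index_eq[OF ps(2)] by simp
      have psP: "ps ! t \<in> P" if "t < s" for t using ps that nth_mem by metis
      define B where "B i = (if i < D - s then T i else {ps ! (i - (D - s))})" for i
      show ?thesis
      proof (rule blocks[of \<psi> \<pi> s r xs D B])
        have QL: "Q \<subseteq> {..<length xs}" by (auto simp: Q_def)
        have QP: "\<And>x. x \<in> Q \<Longrightarrow> x \<notin> P" by (simp add: Q_def)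
        have BT: "B i = T i" if "i < D - s" for i using that by (simp add: B_def)
        have Bp: "B i = {ps ! (i - (D - s))}" if "\<not> i < D - s" for i using that by (simp add: B_def)
        show "\<forall>i<D. B i \<noteq> {} \<and> B i \<subseteq> {..<length xs} \<and> \<pi> (\<Sum>j\<in>B i. xs ! j) = 0"
        proof (intro allI impI)
          fix i assume i: "i < D"
          show "B i \<noteq> {} \<and> B i \<subseteq> {..<length xs} \<and> \<pi> (\<Sum>j\<in>B i. xs ! j) = 0"
          proof (cases "i < D - s")
            case True
            have "T i \<noteq> {}" "T i \<subseteq> Q" "\<pi> (\<Sum>j\<in>T i. xs ! j) = 0" using Tp[OF True] by blast+
            then show ?thesis unfolding BT[OF True] using QL by blast
          next
            case False
            hence t: "i - (D - s) < s" using i by linarith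
            have p: "ps ! (i - (D - s)) \<in> P" by (rule psP[OF t])
            hence "ps ! (i - (D - s)) < length xs" "\<pi> (xs ! (ps ! (i - (D - s)))) = 0"
              using H(5,6) by blast+
            then show ?thesis unfolding Bp[OF False] by simp
          qed
        qed
        show "\<forall>i<D. \<forall>i'<D. i \<noteq> i' \<longrightarrow> B i \<inter> B i' = {}"
        proof (intro allI impI)
          fix i i' assume ii: "i < D" "i' < D" "i \<noteq> i'"
          show "B i \<inter> B i' = {}"
          proof (cases "i < D - s")
            case True
            show ?thesis
            proof (cases "i' < D - s")
              case True2: True
              show ?thesis unfolding BT[OF True] BT[OF True2] by (rule Td[OF True True2 ii(3)])
            next
              case False
              hence t: "i' - (D - s) < s" using ii by linarith
              have "ps ! (i' - (D - s)) \<notin> T i" using psP[OF t] Tp[OF True] QP by blast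
              then show ?thesis unfolding BT[OF True] Bp[OF False] by blast
            qed
          next
            case False
            hence t: "i - (D - s) < s" using ii by linarith
            show ?thesis
            proof (cases "i' < D - s")
              case True2: True
              have "ps ! (i - (D - s)) \<notin> T i'" using psP[OF t] Tp[OF True2] QP by blast
              then show ?thesis unfolding BT[OF True2] Bp[OF False] by blast
            next
              case False2: False
              hence t2: "i' - (D - s) < s" using ii by linarith
              have ne: "i - (D - s) \<noteq> i' - (D - s)" using False False2 ii by linarith
              have "ps ! (i - (D - s)) \<noteq> ps ! (i' - (D - s))"
              proof
                assume "ps ! (i - (D - s)) = ps ! (i' - (D - s))"
                hence "i - (D - s) = i' - (D - s)" using injp t t2 ps(1) by simp
                thus False using ne by blast
              qed
              then show ?thesis unfolding Bp[OF False] Bp[OF False2] by blast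
            qed
          qed
        qed
      qed (use H(1-4) a in \<open>simp_all add: D_def\<close>)
    qed
  qed
  hence "(LEAST l. \<forall>xs. set xs \<subseteq> C2pow r \<and> length xs \<ge> l \<longrightarrow> has_disj_zero_sums k xs) \<le> M + s"
    by (rule Least_le)
  then show ?thesis unfolding Dk_def[of k "C2pow r"] M_def D_def .
qed

end
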